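(* Let $(a_0,\ldots,a_n)$ be a finite sequence of positive integers and $m\ge 1$ an integer. Then $\lim_{N\to\infty}\Phi(\beta^N)=\infty$.
   Context: For positive integers $d_0,d_1,\ldots$, $[d_0,d_1,d_2,\ldots]$ denotes the continued fraction $\cfrac{1}{d_0+\cfrac{1}{d_1+\cfrac{1}{d_2+\cdots}}}$, and for $\beta=[d_0,d_1,\ldots]$ we write $\alpha_j(\beta)=[d_j,d_{j+1},\ldots]$. $\Phi(\beta)=\sum_{k\ge 0}\alpha_0(\beta)\cdots\alpha_{k-1}(\beta)\log\frac{1}{\alpha_k(\beta)}$ is the Yoccoz Brjuno function. For $N\ge1$, $\beta^N$ is the number whose digits (indexed from $0$) are $a_0,\ldots,a_n$ in positions $0,\ldots,n$, $N$ in position $n+m$, and $1$ in all other positions. *)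

theory Defs
  imports "HOL-Analysis.Analysis"
begin

fun cf_fin :: "(nat \<Rightarrow> nat) \<Rightarrow> nat \<Rightarrow> real" where
  "cf_fin d 0 = 0"
| "cf_fin d (Suc k) = 1 / (real (d 0) + cf_fin (\<lambda>i. d (Suc i)) k)"

definition cf :: "(nat \<Rightarrow> nat) \<Rightarrow> real" where
  "cf d = lim (\<lambda>k. cf_fin d k)"

definition cf_alpha :: "nat \<Rightarrow> (nat \<Rightarrow> nat) \<Rightarrow> real" where
  "cf_alpha j d = cf (\<lambda>i. d (i + j))"

definition brjuno :: "(nat \<Rightarrow> nat) \<Rightarrow> real" where
  "brjuno d = (\<Sum>k. (\<Prod>j<k. cf_alpha j d) * ln (1 / cf_alpha k d))"

text \<open>Digits of beta^N: a_i at positions 0..n, N at position n+m, 1 elsewhere.\<close>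
definition beta_digits :: "(nat \<Rightarrow> nat) \<Rightarrow> nat \<Rightarrow> nat \<Rightarrow> nat \<Rightarrow> nat \<Rightarrow> nat" where
  "beta_digits a n m N i = (if i \<le> n then a i else if i = n + m then N else 1)"

end

theory Submission
  imports Defs
begin

lemma cf_fin_nonneg: "cf_fin d k \<ge> 0"
  by (induction k arbitrary: d) auto

definition gold :: real where "gold = (sqrt 5 - 1) / 2"

lemma gold_props: "0 < gold" "gold < 1" "gold = 1 / (1 + gold)"
proof -
  have s: "sqrt 5 * sqrt 5 = 5" by simp
  have "sqrt 5 > 1" by (simp add: real_less_rsqrt)
  moreover have "sqrt 5 < 3" by (simp add: real_sqrt_less_iff real_less_lsqrt)
  ultimately show "0 < gold" "gold < 1" unfolding gold_def by auto
  have "gold * (1 + gold) = 1" unfolding gold_def using s by (simp add: field_simps)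
  moreover have "1 + gold > 0" using \<open>0 < gold\<close> by simp
  ultimately show "gold = 1 / (1 + gold)" by (simp add: field_simps)
qed

lemma cf_fin_ones_err: "\<bar>cf_fin (\<lambda>_. 1) k - gold\<bar> \<le> gold ^ (k+1)"
proof (induction k)
  case 0
  then show ?case using gold_props by simp
next
  case (Suc k)
  define x where "x = cf_fin (\<lambda>_. 1) k"
  have x0: "x \<ge> 0" unfolding x_def by (rule cf_fin_nonneg)
  have g: "gold > 0" "gold = 1 / (1 + gold)" using gold_props by auto
  have e1: "cf_fin (\<lambda>_. 1) (Suc k) = 1 / (1 + x)" by (simp add: x_def)
  have e2: "1/(1+x) - 1/(1+gold) = (gold - x) * (1/(1+x)) * (1/(1+gold))"
    using x0 g by (simp add: field_simps)
  have eq: "cf_fin (\<lambda>_. 1) (Suc k) - gold = (gold - x) * (1/(1+x)) * gold"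
    using e1 e2 g(2)[symmetric] by simp
  have "\<bar>\<dots>\<bar> = \<bar>x - gold\<bar> * (1/(1+x)) * gold" using x0 g by (simp add: abs_mult)
  also have "\<dots> \<le> \<bar>x - gold\<bar> * 1 * gold"
    using x0 g by (intro mult_right_mono mult_left_mono) auto
  also have "\<dots> \<le> gold ^ (k+1) * gold" using Suc x_def g by (intro mult_right_mono) auto
  finally have "\<bar>cf_fin (\<lambda>_. 1) (Suc k) - gold\<bar> \<le> gold ^ (k + 1) * gold"
    by (simp only: eq)
  also have "gold ^ (k + 1) * gold = gold ^ (Suc k + 1)" by simp
  finally show ?case .
qed

lemma cf_fin_ones: "cf_fin (\<lambda>_. 1) \<longlonglongrightarrow> gold"
proof -
  have "(\<lambda>k. cf_fin (\<lambda>_. 1) k - gold) \<longlonglongrightarrow> 0"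
  proof (rule Lim_null_comparison)
    show "\<forall>\<^sub>F k in sequentially. norm (cf_fin (\<lambda>_. 1) k - gold) \<le> gold ^ (k+1)"
      using cf_fin_ones_err by simp
    show "(\<lambda>k. gold ^ (k+1)) \<longlonglongrightarrow> 0" using gold_props
      LIMSEQ_ignore_initial_segment[OF LIMSEQ_power_zero[of gold], of 1] by auto
  qed
  then have "(\<lambda>k. (cf_fin (\<lambda>_. 1) k - gold) + gold) \<longlonglongrightarrow> 0 + gold"
    by (intro tendsto_intros)
  then show ?thesis by simp
qed

lemma cf_fin_step:
  assumes "cf_fin (\<lambda>i. d (Suc i)) \<longlonglongrightarrow> L" "L \<ge> 0" "d 0 \<ge> 1"
  shows "cf_fin d \<longlonglongrightarrow> 1 / (real (d 0) + L)"
proof -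
  have "(\<lambda>k. 1 / (real (d 0) + cf_fin (\<lambda>i. d (Suc i)) k)) \<longlonglongrightarrow> 1 / (real (d 0) + L)"
    using assms by (intro tendsto_intros) auto
  then have "(\<lambda>k. cf_fin d (Suc k)) \<longlonglongrightarrow> 1 / (real (d 0) + L)" by simp
  then show ?thesis by (rule filterlim_sequentially_Suc[THEN iffD1])
qed

lemma alpha_exists:
  assumes d1: "\<forall>i. d i \<ge> 1" and dK: "\<forall>i\<ge>K. d i = 1"
  shows "\<exists>L. cf_fin (\<lambda>i. d (i + j)) \<longlonglongrightarrow> L \<and> 0 < L \<and> L \<le> 1"
proof -
  have ones: "(\<lambda>i. d (i + j)) = (\<lambda>_. 1)" if "j \<ge> K" for j
    using dK that by auto
  have base: "\<exists>L. cf_fin (\<lambda>i. d (i + j)) \<longlonglongrightarrow> L \<and> 0 < L \<and> L \<le> 1" if "j \<ge> K" for j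
    using ones[OF that] cf_fin_ones gold_props by (intro exI[of _ gold]) auto
  have tl: "\<exists>L. cf_fin (\<lambda>i. d (i + (K - t))) \<longlonglongrightarrow> L \<and> 0 < L \<and> L \<le> 1" for t
  proof (induction t)
    case 0
    then show ?case using base by simp
  next
    case (Suc t)
    show ?case
    proof (cases "t < K")
      case False
      then show ?thesis using Suc.IH by simp
    next
      case True
      define j where "j = K - Suc t"
      have jt: "Suc j = K - t" using True unfolding j_def by simp
      obtain L where L: "cf_fin (\<lambda>i. d (i + Suc j)) \<longlonglongrightarrow> L" "0 < L" "L \<le> 1"
        using Suc jt by auto
      have "cf_fin (\<lambda>i. (\<lambda>i. d (i + j)) (Suc i)) \<longlonglongrightarrow> L" using L(1) by simp
      from cf_fin_step[OF this] have lim: "cf_fin (\<lambda>i. d (i + j)) \<longlonglongrightarrow> 1 / (real (d j) + L)"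
        using L d1 by simp
      have "real (d j) \<ge> 1" using d1 by (simp add: Suc_le_eq)
      then have "0 < 1 / (real (d j) + L)" "1 / (real (d j) + L) \<le> 1" using L by auto
      then show ?thesis using lim j_def by auto
    qed
  qed
  show ?thesis
  proof (cases "j \<ge> K")
    case True
    then show ?thesis using base by blast
  next
    case False
    then have "K - (K - j) = j" by simp
    then show ?thesis using tl[of "K - j"] by simp
  qed
qed

lemma alpha_facts:
  assumes d1: "\<forall>i. d i \<ge> 1" and dK: "\<forall>i\<ge>K. d i = 1"
  shows "cf_fin (\<lambda>i. d (i + j)) \<longlonglongrightarrow> cf_alpha j d"
    and "0 < cf_alpha j d" and "cf_alpha j d \<le> 1"
proof -
  obtain L where L: "cf_fin (\<lambda>i. d (i + j)) \<longlonglongrightarrow> L" "0 < L" "L \<le> 1"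
    using alpha_exists[OF d1 dK] by blast
  have "cf_alpha j d = L" unfolding cf_alpha_def cf_def using L(1) by (rule limI)
  then show "cf_fin (\<lambda>i. d (i + j)) \<longlonglongrightarrow> cf_alpha j d"
    and "0 < cf_alpha j d" and "cf_alpha j d \<le> 1" using L by auto
qed

lemma alpha_rec:
  assumes d1: "\<forall>i. d i \<ge> 1" and dK: "\<forall>i\<ge>K. d i = 1"
  shows "cf_alpha j d = 1 / (real (d j) + cf_alpha (Suc j) d)"
proof -
  have "cf_fin (\<lambda>i. (\<lambda>i. d (i + j)) (Suc i)) \<longlonglongrightarrow> cf_alpha (Suc j) d"
    using alpha_facts(1)[OF d1 dK, of "Suc j"] by simp
  from cf_fin_step[OF this] have "cf_fin (\<lambda>i. d (i + j)) \<longlonglongrightarrow> 1 / (real (d j) + cf_alpha (Suc j) d)"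
    using alpha_facts(2)[OF d1 dK, of "Suc j"] d1 by simp
  then show ?thesis using alpha_facts(1)[OF d1 dK, of j] LIMSEQ_unique by blast
qed

lemma alpha_gold:
  assumes d1: "\<forall>i. d i \<ge> 1" and dK: "\<forall>i\<ge>K. d i = 1" and j: "j \<ge> K"
  shows "cf_alpha j d = gold"
proof -
  have "(\<lambda>i. d (i + j)) = (\<lambda>_. 1)" using dK j by auto
  then have "cf_fin (\<lambda>i. d (i + j)) \<longlonglongrightarrow> gold" using cf_fin_ones by simp
  then show ?thesis using alpha_facts(1)[OF d1 dK, of j] LIMSEQ_unique by blast
qed

lemma brjuno_lower:
  assumes d1: "\<forall>i. d i \<ge> 1" and dK: "\<forall>i\<ge>K. d i = 1"
  shows "brjuno d \<ge> (\<Prod>j<k0. 1 / (real (d j) + 1)) * ln (real (d k0))"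
proof -
  define f where "f k = (\<Prod>j<k. cf_alpha j d) * ln (1 / cf_alpha k d)" for k
  have apos: "0 < cf_alpha j d" and ale: "cf_alpha j d \<le> 1" for j
    using alpha_facts[OF d1 dK] by auto
  have fnn: "f k \<ge> 0" for k
    unfolding f_def using apos ale by (intro mult_nonneg_nonneg prod_nonneg) (auto intro: less_imp_le)
  define P where "P = (\<Prod>j<K. cf_alpha j d)"
  have shift: "f (k + K) = P * gold ^ k * ln (1 / gold)" for k
  proof -
    have "(\<Prod>j<k + K. cf_alpha j d) = P * gold ^ k"
    proof (induction k)
      case 0
      then show ?case by (simp add: P_def)
    next
      case (Suc k)
      have "(\<Prod>j<Suc k + K. cf_alpha j d) = (\<Prod>j<k + K. cf_alpha j d) * cf_alpha (k + K) d"
        by simp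
      also have "cf_alpha (k + K) d = gold" using alpha_gold[OF d1 dK] by simp
      finally show ?case using Suc by simp
    qed
    then show ?thesis unfolding f_def using alpha_gold[OF d1 dK, of "k + K"] by simp
  qed
  have "summable (\<lambda>k. P * ln (1 / gold) * gold ^ k)"
    using gold_props by (intro summable_mult summable_geometric) auto
  then have "summable (\<lambda>k. f (k + K))" unfolding shift by (simp add: mult_ac)
  then have sf: "summable f" by simp
  have "f k0 \<le> suminf f"
    using sum_le_suminf[OF sf, of "{k0}"] fnn by simp
  moreover have "(\<Prod>j<k0. 1 / (real (d j) + 1)) * ln (real (d k0)) \<le> f k0"
    unfolding f_def
  proof (rule mult_mono)
    show "(\<Prod>j<k0. 1 / (real (d j) + 1)) \<le> (\<Prod>j<k0. cf_alpha j d)"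
    proof (rule prod_mono)
      fix j assume "j \<in> {..<k0}"
      have "cf_alpha j d = 1 / (real (d j) + cf_alpha (Suc j) d)" by (rule alpha_rec[OF d1 dK])
      moreover have "real (d j) + cf_alpha (Suc j) d \<le> real (d j) + 1" using ale by simp
      moreover have "0 < real (d j) + cf_alpha (Suc j) d" using apos by (simp add: add_nonneg_pos)
      ultimately have "1 / (real (d j) + 1) \<le> cf_alpha j d"
        by (simp add: frac_le)
      then show "0 \<le> 1 / (real (d j) + 1) \<and> 1 / (real (d j) + 1) \<le> cf_alpha j d" by simp
    qed
    have "1 / cf_alpha k0 d = real (d k0) + cf_alpha (Suc k0) d"
      using alpha_rec[OF d1 dK, of k0] apos[of k0] by simp
    moreover have "real (d k0) \<ge> 1" using d1 by (simp add: Suc_le_eq)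
    ultimately show "ln (real (d k0)) \<le> ln (1 / cf_alpha k0 d)"
      using apos[of "Suc k0"] by simp
    show "0 \<le> (\<Prod>j<k0. cf_alpha j d)" using apos by (intro prod_nonneg) (auto intro: less_imp_le)
    show "0 \<le> ln (real (d k0))" using \<open>real (d k0) \<ge> 1\<close> by simp
  qed
  ultimately show ?thesis unfolding brjuno_def f_def by simp
qed

theorem mainTheorem10:
  fixes a :: "nat \<Rightarrow> nat" and n m :: nat
  assumes "\<forall>i\<le>n. a i > 0" and "m \<ge> 1"
  shows "filterlim (\<lambda>N. brjuno (beta_digits a n m N)) at_top sequentially"
proof -
  define C where "C = (\<Prod>j<n+m. 1 / (real (beta_digits a n m 1 j) + 1))"
  have C: "C > 0" unfolding C_def by (intro prod_pos) auto
  have lim: "filterlim (\<lambda>N. C * ln (real N)) at_top sequentially"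
    by (rule filterlim_tendsto_pos_mult_at_top[OF tendsto_const C]
        filterlim_compose[OF ln_at_top filterlim_real_sequentially])+
  have "eventually (\<lambda>N. C * ln (real N) \<le> brjuno (beta_digits a n m N)) sequentially"
  proof (rule eventually_sequentiallyI[of 1])
    fix N :: nat assume N: "N \<ge> 1"
    have d1: "\<forall>i. beta_digits a n m N i \<ge> 1"
      using assms N by (auto simp: beta_digits_def Suc_le_eq)
    have dK: "\<forall>i\<ge>n+m+1. beta_digits a n m N i = 1"
      using assms by (auto simp: beta_digits_def)
    have "C = (\<Prod>j<n+m. 1 / (real (beta_digits a n m N j) + 1))"
      unfolding C_def by (intro prod.cong) (auto simp: beta_digits_def)
    moreover have "beta_digits a n m N (n+m) = N" using assms by (simp add: beta_digits_def)
    ultimately show "C * ln (real N) \<le> brjuno (beta_digits a n m N)"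
      using brjuno_lower[OF d1 dK, of "n+m"] by simp
  qed
  with lim show ?thesis by (rule filterlim_at_top_mono)
qed

end
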